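(* Let $b\in\mathbb{N}\setminus\{1\}$, $\phi:\mathbb{R}\to\mathbb{R}$ periodic with period $1$, vanishing on $\mathbb{Z}$, and H\"older continuous with exponent $\gamma\in(0,1]$, and $\psi:(0,\infty)\to(0,\infty)$ submultiplicative with $\psi(b^{-1})\in(0,1)$ and $\psi(b^{-1})>b^{-\gamma}$. Fix a sign $\sigma\in\{+1,-1\}$ (corresponding to $f(t)=\sum_{m=0}^\infty\sigma\,\psi(b^{-m})\phi(b^mt)$, i.e. $\xi_m=\sigma$ for all $m$), and let $Z_n:=\sum_{m=1}^n(\sigma\psi(b^{-1})b)^{-m}Y_m$, $n\in\mathbb{N}$. Then the series $Z:=\sum_{m=1}^\infty(\sigma\psi(b^{-1})b)^{-m}Y_m$ is well-defined (converges almost surely), and for every $p>0$ the family $\{|Z_n|^p:n\in\mathbb{N}\}$ is uniformly integrable and $\mathbb{E}(|Z_n|^p)\to\mathbb{E}(|Z|^p)$ as $n\to\infty$.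
   Context: $\psi$ submultiplicative: $\psi(xy)\le\psi(x)\psi(y)$ for $x,y>0$. For $m\in\mathbb{N}$, $k\in\{0,\dots,b^m-1\}$ let $\lambda_{m,k}:=b^m(\phi((k+1)b^{-m})-\phi(kb^{-m}))$. Let $(U_n)_{n\in\mathbb{N}}$ be i.i.d. uniform on $\{0,\dots,b-1\}$, $R_m:=\sum_{i=1}^mU_ib^{i-1}$, $Y_m:=\lambda_{m,R_m}$. *)

theory Defs
  imports "HOL-Probability.Probability"
begin

definition lam :: "nat \<Rightarrow> (real \<Rightarrow> real) \<Rightarrow> nat \<Rightarrow> nat \<Rightarrow> real" where
  "lam b \<phi> m k = real b ^ m * (\<phi> ((real k + 1) / real b ^ m) - \<phi> (real k / real b ^ m))"

definition Rdig :: "nat \<Rightarrow> (nat \<Rightarrow> 'a \<Rightarrow> nat) \<Rightarrow> nat \<Rightarrow> 'a \<Rightarrow> nat" where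
  "Rdig b U m \<omega> = (\<Sum>i=1..m. U i \<omega> * b ^ (i - 1))"

definition Ymv :: "nat \<Rightarrow> (real \<Rightarrow> real) \<Rightarrow> (nat \<Rightarrow> 'a \<Rightarrow> nat) \<Rightarrow> nat \<Rightarrow> 'a \<Rightarrow> real" where
  "Ymv b \<phi> U m \<omega> = lam b \<phi> m (Rdig b U m \<omega>)"

definition unif_integrable :: "'a measure \<Rightarrow> ('i \<Rightarrow> 'a \<Rightarrow> real) \<Rightarrow> 'i set \<Rightarrow> bool" where
  "unif_integrable M X I \<longleftrightarrow>
     (\<forall>i\<in>I. integrable M (X i)) \<and>
     (\<forall>e>0. \<exists>K. \<forall>i\<in>I. (LINT x|M. \<bar>X i x\<bar> * indicator {x \<in> space M. K < \<bar>X i x\<bar>} x) \<le> e)"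

end

theory Submission
  imports Defs
begin

lemma lam_bound:
  assumes b: "b \<ge> 2" and hC: "\<forall>x y. \<bar>\<phi> x - \<phi> y\<bar> \<le> C * \<bar>x - y\<bar> powr \<gamma>"
  shows "\<bar>lam b \<phi> m k\<bar> \<le> \<bar>C\<bar> * (real b powr (1 - \<gamma>)) ^ m"
proof -
  have bp: "real b ^ m > 0" using b by simp
  have "\<bar>lam b \<phi> m k\<bar> = real b ^ m * \<bar>\<phi> ((real k + 1) / real b ^ m) - \<phi> (real k / real b ^ m)\<bar>"
    unfolding lam_def using bp by (simp add: abs_mult)
  also have "\<dots> \<le> real b ^ m * (C * \<bar>(real k + 1) / real b ^ m - real k / real b ^ m\<bar> powr \<gamma>)"
    using hC bp by (intro mult_left_mono) auto
  also have "\<bar>(real k + 1) / real b ^ m - real k / real b ^ m\<bar> = 1 / real b ^ m"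
    using bp by (simp add: field_simps)
  also have "(1 / real b ^ m) powr \<gamma> = (real b powr (-\<gamma>)) ^ m"
    using b by (simp add: powr_divide powr_realpow[symmetric] powr_powr powr_minus_divide powr_power mult.commute)
  also have "real b ^ m * (C * (real b powr (-\<gamma>)) ^ m) \<le> real b ^ m * (\<bar>C\<bar> * (real b powr (-\<gamma>)) ^ m)"
    using bp by (intro mult_left_mono mult_right_mono) auto
  also have "\<dots> = \<bar>C\<bar> * (real b * real b powr (-\<gamma>)) ^ m"
    by (simp add: power_mult_distrib)
  also have "real b * real b powr (-\<gamma>) = real b powr (1 - \<gamma>)"
    using b by (simp add: powr_diff powr_minus divide_inverse)
  finally show ?thesis .
qed

lemma term_bound:
  assumes b: "b \<ge> 2" and hC: "\<forall>x y. \<bar>\<phi> x - \<phi> y\<bar> \<le> C * \<bar>x - y\<bar> powr \<gamma>"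
    and ps: "\<psi>1 > 0" and sigma: "\<sigma> = 1 \<or> \<sigma> = -1"
  shows "\<bar>(1 / (\<sigma> * \<psi>1 * real b)) ^ m * lam b \<phi> m k\<bar> \<le> \<bar>C\<bar> * (real b powr (-\<gamma>) / \<psi>1) ^ m"
proof -
  have "\<bar>(1 / (\<sigma> * \<psi>1 * real b)) ^ m\<bar> = (1 / (\<psi>1 * real b)) ^ m"
    using sigma ps b by (auto simp: power_abs abs_mult)
  hence "\<bar>(1 / (\<sigma> * \<psi>1 * real b)) ^ m * lam b \<phi> m k\<bar> = (1 / (\<psi>1 * real b)) ^ m * \<bar>lam b \<phi> m k\<bar>"
    by (simp add: abs_mult)
  also have "\<dots> \<le> (1 / (\<psi>1 * real b)) ^ m * (\<bar>C\<bar> * (real b powr (1 - \<gamma>)) ^ m)"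
    using lam_bound[OF b hC] ps b by (intro mult_left_mono) auto
  also have "\<dots> = \<bar>C\<bar> * (real b powr (1 - \<gamma>) / (\<psi>1 * real b)) ^ m"
    by (simp add: power_divide field_simps)
  also have "real b powr (1 - \<gamma>) / (\<psi>1 * real b) = real b powr (-\<gamma>) / \<psi>1"
    using b ps by (simp add: powr_diff powr_minus field_simps)
  finally show ?thesis .
qed

lemma Rdig_meas:
  assumes "\<And>i. i \<ge> 1 \<Longrightarrow> U i \<in> measurable M (count_space UNIV)"
  shows "Rdig b U m \<in> measurable M (count_space UNIV)"
proof (induction m)
  case 0
  then show ?case by (simp add: Rdig_def)
next
  case (Suc m)
  have eq: "Rdig b U (Suc m) = (\<lambda>\<omega>. Rdig b U m \<omega> + U (Suc m) \<omega> * b ^ m)"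
    by (simp add: Rdig_def fun_eq_iff)
  have "(\<lambda>\<omega>. (\<lambda>i \<omega>. Rdig b U m \<omega> + i * b ^ m) (U (Suc m) \<omega>) \<omega>) \<in> measurable M (count_space UNIV)"
  proof (rule measurable_compose_countable[where f="\<lambda>i \<omega>. Rdig b U m \<omega> + i * b ^ m" and g="U (Suc m)"])
    fix i :: nat
    show "(\<lambda>\<omega>. Rdig b U m \<omega> + i * b ^ m) \<in> measurable M (count_space UNIV)"
      using measurable_compose[OF Suc, of "\<lambda>j. j + i * b ^ m" "count_space UNIV"] by simp
  qed (use assms in auto)
  then show ?case unfolding eq by simp
qed

lemma Ymv_meas:
  assumes "\<And>i. i \<ge> 1 \<Longrightarrow> U i \<in> measurable M (count_space UNIV)"
  shows "Ymv b \<phi> U m \<in> borel_measurable M"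
  unfolding Ymv_def
  using measurable_compose_countable[where f="\<lambda>k \<omega>. lam b \<phi> m k" and g="Rdig b U m" and M=M and N=borel]
    Rdig_meas[OF assms] by auto

theorem lemma3p1:
  fixes M :: "'a measure" and b :: nat and \<phi> :: "real \<Rightarrow> real" and \<gamma> :: real
    and \<psi> :: "real \<Rightarrow> real" and \<sigma> :: real and U :: "nat \<Rightarrow> 'a \<Rightarrow> nat"
  assumes "prob_space M"
    and b: "b \<ge> 2"
    and per: "\<And>x. \<phi> (x + 1) = \<phi> x"
    and vanish: "\<And>k::int. \<phi> (of_int k) = 0"
    and gamma: "0 < \<gamma>" "\<gamma> \<le> 1"
    and hoelder: "\<exists>C. \<forall>x y. \<bar>\<phi> x - \<phi> y\<bar> \<le> C * \<bar>x - y\<bar> powr \<gamma>"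
    and psi_pos: "\<And>x. x > 0 \<Longrightarrow> \<psi> x > 0"
    and psi_submult: "\<And>x y. x > 0 \<Longrightarrow> y > 0 \<Longrightarrow> \<psi> (x * y) \<le> \<psi> x * \<psi> y"
    and psi_b: "0 < \<psi> (1 / real b)" "\<psi> (1 / real b) < 1"
    and psi_gamma: "\<psi> (1 / real b) > real b powr (- \<gamma>)"
    and sigma: "\<sigma> = 1 \<or> \<sigma> = -1"
    and indep: "prob_space.indep_vars M (\<lambda>_. count_space UNIV) U {1..}"
    and unif: "\<And>i. i \<ge> 1 \<Longrightarrow> distr M (count_space UNIV) (U i) = measure_pmf (pmf_of_set {..<b})"
  defines "Z \<equiv> \<lambda>n \<omega>. \<Sum>m=1..n. (1 / (\<sigma> * \<psi> (1 / real b) * real b)) ^ m * Ymv b \<phi> U m \<omega>"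
  shows "(AE \<omega> in M. convergent (\<lambda>n. Z n \<omega>))
       \<and> (\<forall>p>0. unif_integrable M (\<lambda>n \<omega>. \<bar>Z n \<omega>\<bar> powr p) {1..}
                \<and> (\<lambda>n. LINT \<omega>|M. \<bar>Z n \<omega>\<bar> powr p)
                    \<longlonglongrightarrow> (LINT \<omega>|M. \<bar>lim (\<lambda>n. Z n \<omega>)\<bar> powr p))"
proof -
  interpret prob_space M by fact
  obtain C where hC: "\<forall>x y. \<bar>\<phi> x - \<phi> y\<bar> \<le> C * \<bar>x - y\<bar> powr \<gamma>" using hoelder by blast
  have Umeas: "\<And>i. i \<ge> 1 \<Longrightarrow> U i \<in> measurable M (count_space UNIV)"
    using indep unfolding indep_vars_def by auto
  define q where "q = real b powr (-\<gamma>) / \<psi> (1 / real b)"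
  have q0: "q > 0" using psi_b b by (simp add: q_def)
  have q1: "q < 1" using psi_b psi_gamma by (simp add: q_def)
  define T where "T = (\<lambda>m \<omega>. (1 / (\<sigma> * \<psi> (1 / real b) * real b)) ^ m * Ymv b \<phi> U m \<omega>)"
  have Tb: "\<bar>T m \<omega>\<bar> \<le> \<bar>C\<bar> * q ^ m" for m \<omega>
    unfolding T_def Ymv_def q_def by (rule term_bound[OF b hC psi_b(1) sigma])
  have gs: "summable (\<lambda>m. \<bar>C\<bar> * q ^ m)"
    using q0 q1 by (intro summable_mult summable_geometric) auto
  have gsum: "(\<Sum>m. \<bar>C\<bar> * q ^ m) = \<bar>C\<bar> * (1 / (1 - q))"
    using q0 q1 by (simp add: suminf_mult suminf_geometric)
  define B where "B = \<bar>C\<bar> * (1 / (1 - q))"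
  have B0: "B \<ge> 0" using q1 by (simp add: B_def)
  have summ: "summable (\<lambda>m. T m \<omega>)" for \<omega>
    by (rule summable_comparison_test'[OF gs]) (use Tb in auto)
  have Zeq: "Z n \<omega> = (\<Sum>m<Suc n. T m \<omega>) - T 0 \<omega>" for n \<omega>
  proof -
    have "{..<Suc n} = insert 0 {1..n}" by auto
    thus ?thesis unfolding Z_def T_def by simp
  qed
  have conv: "convergent (\<lambda>n. Z n \<omega>)" for \<omega>
  proof -
    have "(\<lambda>n. \<Sum>m<Suc n. T m \<omega>) \<longlonglongrightarrow> (\<Sum>m. T m \<omega>)"
      using summable_LIMSEQ[OF summ] by (rule LIMSEQ_Suc)
    hence "(\<lambda>n. Z n \<omega>) \<longlonglongrightarrow> (\<Sum>m. T m \<omega>) - T 0 \<omega>"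
      unfolding Zeq by (intro tendsto_diff) auto
    thus ?thesis by (auto simp: convergent_def)
  qed
  have Zb: "\<bar>Z n \<omega>\<bar> \<le> B" for n \<omega>
  proof -
    have "\<bar>Z n \<omega>\<bar> \<le> (\<Sum>m=1..n. \<bar>T m \<omega>\<bar>)" unfolding Z_def T_def by (rule sum_abs)
    also have "\<dots> \<le> (\<Sum>m=1..n. \<bar>C\<bar> * q ^ m)" by (intro sum_mono Tb)
    also have "\<dots> \<le> (\<Sum>m. \<bar>C\<bar> * q ^ m)"
      using q0 by (intro sum_le_suminf[OF gs]) auto
    finally show ?thesis using gsum B_def by simp
  qed
  have Zmeas: "Z n \<in> borel_measurable M" for n
    unfolding Z_def using Ymv_meas[OF Umeas] by measurable
  show ?thesis
  proof (intro conjI allI impI)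
    show "AE \<omega> in M. convergent (\<lambda>n. Z n \<omega>)" using conv by simp
  next
    fix p :: real assume p: "p > 0"
    have Xmeas: "(\<lambda>\<omega>. \<bar>Z n \<omega>\<bar> powr p) \<in> borel_measurable M" for n
      using Zmeas[of n] by measurable
    have Xb: "norm (\<bar>Z n \<omega>\<bar> powr p) \<le> B powr p" for n \<omega>
      using Zb[of n \<omega>] p by (simp add: powr_mono2)
    have Xint: "integrable M (\<lambda>\<omega>. \<bar>Z n \<omega>\<bar> powr p)" for n
      by (rule integrable_const_bound[where B="B powr p"]) (use Xb Xmeas in auto)
    show "unif_integrable M (\<lambda>n \<omega>. \<bar>Z n \<omega>\<bar> powr p) {1..}"
      unfolding unif_integrable_def
    proof (intro conjI ballI allI impI)
      fix e :: real assume e: "e > 0"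
      have "(\<lambda>x. \<bar>\<bar>Z i x\<bar> powr p\<bar> * indicator {x \<in> space M. B powr p < \<bar>\<bar>Z i x\<bar> powr p\<bar>} x) = (\<lambda>x. 0)" for i
        using Xb by (auto simp: fun_eq_iff indicator_def not_less)
      then show "\<exists>K. \<forall>i\<in>{1..}. (LINT x|M. \<bar>\<bar>Z i x\<bar> powr p\<bar> * indicator {x \<in> space M. K < \<bar>\<bar>Z i x\<bar> powr p\<bar>} x) \<le> e"
        using e by (intro exI[of _ "B powr p"]) simp
    qed (use Xint in auto)
    show "(\<lambda>n. LINT \<omega>|M. \<bar>Z n \<omega>\<bar> powr p) \<longlonglongrightarrow> (LINT \<omega>|M. \<bar>lim (\<lambda>n. Z n \<omega>)\<bar> powr p)"
    proof (rule integral_dominated_convergence[where w="\<lambda>_. B powr p"])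
      show "(\<lambda>\<omega>. \<bar>lim (\<lambda>n. Z n \<omega>)\<bar> powr p) \<in> borel_measurable M"
        using Zmeas by measurable
      show "AE x in M. (\<lambda>n. \<bar>Z n x\<bar> powr p) \<longlonglongrightarrow> \<bar>lim (\<lambda>n. Z n x)\<bar> powr p"
      proof (intro AE_I2)
        fix x
        have "(\<lambda>n. Z n x) \<longlonglongrightarrow> lim (\<lambda>n. Z n x)" using conv convergent_LIMSEQ_iff by blast
        thus "(\<lambda>n. \<bar>Z n x\<bar> powr p) \<longlonglongrightarrow> \<bar>lim (\<lambda>n. Z n x)\<bar> powr p"
          using p by (intro tendsto_powr' tendsto_rabs tendsto_const) auto
      qed
    qed (use Xmeas Xb in auto)
  qed
qed

end
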